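(* Let $\alpha>0$, $h>0$, $D_x>0$, $D_y>0$ and $C>0$. Let $x_m\sim\mathrm{Unif}[0,D_x]$ and $y_m\sim\mathrm{Unif}[-D_y/2,D_y/2]$ be independent. Place the pinching antenna at $x_p=x_m$, so that the received SNR is $\gamma_r=\frac{\eta P_t e^{-\alpha x_m}}{\sigma^2(y_m^2+h^2)}$. Let $P_{out}=\Pr(\gamma_r\le\gamma_{\mathrm{thr}})$. Then $P_{out}$ is given by the following case distinction. (i) If $h^2\ge C$: $P_{out}=1$. (ii) If $h^2\le C$, $h^2\ge C-\frac{D_y^2}{4}$ and $h^2\ge Ce^{-\alpha D_x}$: $P_{out}=1+\frac{4}{\alpha D_xD_y}\left(h\tan^{-1}\!\left(\frac{\sqrt{C-h^2}}{h}\right)-\sqrt{C-h^2}\right)$. (iii) If $h^2\le C-\frac{D_y^2}{4}$ and $h^2\ge Ce^{-\alpha D_x}$: $P_{out}=1+\frac{\ln\left(\frac{h^2}{C}+\frac{D_y^2}{4C}\right)-2}{\alpha D_x}+\frac{4h\tan^{-1}\left(\frac{D_y}{2h}\right)}{\alpha D_xD_y}$. (iv) If $h^2\ge C-\frac{D_y^2}{4}$ and $h^2\le Ce^{-\alpha D_x}$: $P_{out}=1+\frac{4}{\alpha D_xD_y}\Big(\sqrt{Ce^{-\alpha D_x}-h^2}-h\tan^{-1}\!\big(\tfrac{\sqrt{Ce^{-\alpha D_x}-h^2}}{h}\big)-\sqrt{C-h^2}+h\tan^{-1}\!\big(\tfrac{\sqrt{C-h^2}}{h}\big)\Big)$. (v)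 If $h^2\le C-\frac{D_y^2}{4}$, $h^2\le Ce^{-\alpha D_x}$ and $h^2\ge Ce^{-\alpha D_x}-\frac{D_y^2}{4}$: $P_{out}=1+\frac{4}{\alpha D_xD_y}\Big(\sqrt{Ce^{-\alpha D_x}-h^2}-h\tan^{-1}\!\big(\tfrac{\sqrt{Ce^{-\alpha D_x}-h^2}}{h}\big)-\frac{D_y}{2}+h\tan^{-1}\!\big(\tfrac{D_y}{2h}\big)\Big)+\frac{\ln\left(\frac{h^2}{C}+\frac{D_y^2}{4C}\right)}{\alpha D_x}$. (vi) If $h^2\le Ce^{-\alpha D_x}-\frac{D_y^2}{4}$: $P_{out}=0$.
   Context: Pinching-antenna system: a dielectric waveguide lies parallel to the $x$-axis at height $h$, fed at $(0,0,h)$, spanning $x\in[0,D_x]$. A single pinching antenna is at $(x_p,0,h)$, $x_p\in[0,D_x]$; a single-antenna user is at $(x_m,y_m,0)$. The waveguide has absorption coefficient $\alpha$ (power attenuates as $e^{-\alpha x_p}$). The received SNR is $\gamma_r=\frac{\eta P_t e^{-\alpha x_p}}{\sigma^2\left((x_m-x_p)^2+y_m^2+h^2\right)}$, where $\eta=\lambda^2/(16\pi^2)>0$, $P_t>0$ is the transmit power, $\sigma^2>0$ the noise variance. $\gamma_{\mathrm{thr}}>0$ is the SNR threshold and $C=\frac{\eta P_t}{\gamma_{\mathrm{thr}}\sigma^2}$. *)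

theory Defs
  imports "HOL-Probability.Probability"
begin

text \<open>Received SNR with the pinching antenna at x_p = x_m (user at (x_m, y_m, 0)).\<close>
definition snr_r :: "real \<Rightarrow> real \<Rightarrow> real \<Rightarrow> real \<Rightarrow> real \<Rightarrow> real \<Rightarrow> real \<Rightarrow> real" where
  "snr_r \<eta> Pt \<sigma>2 \<alpha> h xm ym = \<eta> * Pt * exp (- \<alpha> * xm) / (\<sigma>2 * (ym\<^sup>2 + h\<^sup>2))"

definition user_law :: "real \<Rightarrow> real \<Rightarrow> (real \<times> real) measure" where
  "user_law Dx Dy = uniform_measure lborel {0..Dx} \<Otimes>\<^sub>M uniform_measure lborel {-Dy/2..Dy/2}"

definition P_out :: "real \<Rightarrow> real \<Rightarrow> real \<Rightarrow> real \<Rightarrow> real \<Rightarrow> real \<Rightarrow> real \<Rightarrow> real \<Rightarrow> real" where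
  "P_out \<eta> Pt \<sigma>2 \<gamma>thr \<alpha> h Dx Dy =
     measure (user_law Dx Dy) {(xm, ym). snr_r \<eta> Pt \<sigma>2 \<alpha> h xm ym \<le> \<gamma>thr}"

end

theory Submission
  imports Defs
begin


lemma inner_meas:
  fixes a t :: real assumes a: "a > 0"
  shows "emeasure lborel ({-a..a} \<inter> {y. t \<le> y\<^sup>2}) = ennreal (2*a - 2*min a (sqrt (max 0 t)))"
proof (cases "t \<le> a\<^sup>2")
  case True
  define s where "s = sqrt (max 0 t)"
  have s0: "0 \<le> s" unfolding s_def by simp
  have sa: "s \<le> a" unfolding s_def using True a
    by (metis abs_of_pos max.boundedI real_sqrt_abs real_sqrt_le_mono zero_le_power2)
  have key: "t \<le> y\<^sup>2 \<longleftrightarrow> s \<le> \<bar>y\<bar>" for y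
  proof -
    have "s \<le> \<bar>y\<bar> \<longleftrightarrow> sqrt (max 0 t) \<le> sqrt (y\<^sup>2)" by (simp add: s_def)
    also have "\<dots> \<longleftrightarrow> max 0 t \<le> y\<^sup>2" by (rule real_sqrt_le_iff)
    finally show ?thesis by auto
  qed
  have eq: "{-a..a} \<inter> {y. t \<le> y\<^sup>2} = {-a..a} - {-s<..<s}"
    using key by (auto simp: abs_if)
  have "emeasure lborel ({-a..a} - {-s<..<s}) = emeasure lborel {-a..a} - emeasure lborel {-s<..<s}"
    using sa s0 by (intro emeasure_Diff) auto
  also have "\<dots> = ennreal (2 * a) - ennreal (2 * s)" using a s0 by simp
  also have "\<dots> = ennreal (2 * a - 2 * s)" using s0 by (subst ennreal_minus) auto
  finally show ?thesis using eq sa by (simp add: s_def)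
next
  case False
  have "{-a..a} \<inter> {y. t \<le> y\<^sup>2} = {}"
  proof -
    { fix y :: real assume "y \<in> {-a..a}"
      then have "\<bar>y\<bar> \<le> \<bar>a\<bar>" using a by auto
      then have "y\<^sup>2 \<le> a\<^sup>2" by (rule abs_le_square_iff[THEN iffD1])
      then have "\<not> t \<le> y\<^sup>2" using False by auto }
    then show ?thesis by auto
  qed
  moreover have "min a (sqrt (max 0 t)) = a"
  proof -
    have "a \<le> sqrt (max 0 t)" using False a
      by (metis abs_of_pos linorder_not_le max.cobounded2 order.strict_implies_order order_trans real_sqrt_abs real_sqrt_le_mono)
    then show ?thesis by simp
  qed
  ultimately show ?thesis by simp
qed




lemma exp_cmp:
  fixes C K al y :: real assumes "C > 0" "K > 0" "al > 0"
  shows "K < C*exp(-al*y) \<longleftrightarrow> y < ln(C/K)/al"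
proof -
  have "K < C*exp(-al*y) \<longleftrightarrow> K/C < exp(-al*y)" using assms by (simp add: field_simps)
  also have "\<dots> \<longleftrightarrow> ln (K/C) < -al*y" using assms
    by (metis divide_pos_pos ln_less_cancel_iff exp_gt_zero ln_exp)
  also have "\<dots> \<longleftrightarrow> y < ln(C/K)/al" using assms by (simp add: ln_div field_simps)
  finally show ?thesis .
qed

lemma exp_cmp2:
  fixes C K al y :: real assumes "C > 0" "K > 0" "al > 0"
  shows "C*exp(-al*y) < K \<longleftrightarrow> ln(C/K)/al < y"
proof -
  have "C*exp(-al*y) < K \<longleftrightarrow> exp(-al*y) < K/C" using assms by (simp add: field_simps)
  also have "\<dots> \<longleftrightarrow> -al*y < ln (K/C)" using assms
    by (metis divide_pos_pos ln_less_cancel_iff exp_gt_zero ln_exp)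
  also have "\<dots> \<longleftrightarrow> ln(C/K)/al < y" using assms by (simp add: ln_div field_simps)
  finally show ?thesis .
qed


lemma aux_alg:
  fixes u h al C E :: real
  assumes "u > 0" "h > 0" "al > 0" "u\<^sup>2 = C*E - h\<^sup>2"
  shows "(inverse u * (E*al*C) - inverse (1 + (u/h)\<^sup>2) * (inverse u * (E*(al*C))))/al = u"
proof -
  have ce: "C*E = u\<^sup>2 + h\<^sup>2" using assms by simp
  have "u\<^sup>2 + h\<^sup>2 > 0" using assms(1,2) by (simp add: add_pos_pos)
  then have "C*E > 0" using ce by simp
  then have cne: "C \<noteq> 0" "E \<noteq> 0" by auto
  have "1 + (u/h)\<^sup>2 = (u\<^sup>2 + h\<^sup>2)/h\<^sup>2" using assms by (simp add: field_simps power2_eq_square)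
  then have "inverse (1 + (u/h)\<^sup>2) = h\<^sup>2 / (u\<^sup>2 + h\<^sup>2)" by simp
  then have "(inverse u * (E*al*C) - inverse (1 + (u/h)\<^sup>2) * (inverse u * (E*(al*C))))/al
     = (C*E) * (1 - h\<^sup>2 / (u\<^sup>2 + h\<^sup>2)) / u" using assms cne by (simp add: field_simps)
  also have "\<dots> = (u\<^sup>2 + h\<^sup>2) * (1 - h\<^sup>2 / (u\<^sup>2 + h\<^sup>2)) / u" by (simp only: ce)
  also have "(u\<^sup>2 + h\<^sup>2) * (1 - h\<^sup>2 / (u\<^sup>2 + h\<^sup>2)) = u\<^sup>2"
    using \<open>u\<^sup>2 + h\<^sup>2 > 0\<close> by (simp add: right_diff_distrib)
  also have "u\<^sup>2 / u = u" using assms(1) by (simp add: power2_eq_square)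
  finally show ?thesis .
qed
lemma deriv_mid:
  fixes C h al x c :: real
  assumes "C > 0" "h > 0" "al > 0" "h\<^sup>2 < C*exp(-al*x)"
  shows "((\<lambda>y. 2/al * (h*arctan(sqrt (C*exp(-al*y) - h\<^sup>2)/h) - sqrt (C*exp(-al*y) - h\<^sup>2)) + c) has_real_derivative sqrt (C*exp(-al*x) - h\<^sup>2)) (at x)"
  using assms
  apply -
  apply (rule derivative_eq_intros refl | simp)+
  apply (rule aux_alg)
  apply (auto simp: algebra_simps)
  done



lemma integral_w:
  fixes al h C a D :: real
  assumes al: "al > 0" and h: "h > 0" and C: "C > 0" and a: "a > 0" and D: "0 \<le> D"
  and w_def: "w = (\<lambda>x. min a (sqrt (max 0 (C*exp(-al*x) - h\<^sup>2))))"
  and xa_def: "xa = ln (C/(a\<^sup>2+h\<^sup>2))/al" and x0_def: "x0 = ln (C/h\<^sup>2)/al"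
  and Mf_def: "Mf = (\<lambda>x. 2/al*(h*arctan(w x/h) - w x) + a*min x xa)"
  shows "(w has_integral (Mf D - Mf 0)) {0..D}"
proof (rule fundamental_theorem_of_calculus_strong[where S="{xa, x0}"])
  have hp: "h\<^sup>2 > 0" using h by simp
  have ap: "a\<^sup>2 + h\<^sup>2 > 0" using h a by (simp add: add_pos_pos)
  have "C/(a\<^sup>2+h\<^sup>2) < C/h\<^sup>2" using C hp a ap by (intro divide_strict_left_mono) auto
  then have "ln (C/(a\<^sup>2+h\<^sup>2)) < ln (C/h\<^sup>2)" using C ap hp by (subst ln_less_cancel_iff) auto
  then have xax0: "xa < x0" unfolding xa_def x0_def using al by (simp add: divide_strict_right_mono)
  have r1: "w y = a" if "y < xa" for y
  proof -
    have "a\<^sup>2 + h\<^sup>2 < C*exp(-al*y)" using exp_cmp[OF C ap al] that xa_def by simp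
    then have "a\<^sup>2 < max 0 (C*exp(-al*y) - h\<^sup>2)" by simp
    then have "sqrt (a\<^sup>2) < sqrt (max 0 (C*exp(-al*y) - h\<^sup>2))" by (simp only: real_sqrt_less_iff)
    then show ?thesis using a unfolding w_def by simp
  qed
  have r2: "w y = sqrt (C*exp(-al*y) - h\<^sup>2) \<and> C*exp(-al*y) - h\<^sup>2 > 0" if "xa < y" "y < x0" for y
  proof -
    have "C*exp(-al*y) < a\<^sup>2 + h\<^sup>2" using exp_cmp2[OF C ap al] that xa_def by simp
    then have "sqrt (C*exp(-al*y) - h\<^sup>2) < sqrt (a\<^sup>2)" by (simp only: real_sqrt_less_iff)
    moreover have "h\<^sup>2 < C*exp(-al*y)" using exp_cmp[OF C hp al] that x0_def by simp
    ultimately show ?thesis using a unfolding w_def by simp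
  qed
  have r3: "w y = 0" if "x0 < y" for y
  proof -
    have "C*exp(-al*y) < h\<^sup>2" using exp_cmp2[OF C hp al] that x0_def by simp
    then show ?thesis using a unfolding w_def by simp
  qed
  show "finite {xa, x0}" by simp
  show "0 \<le> D" by fact
  show "continuous_on {0..D} Mf" unfolding Mf_def w_def using h al
    by (intro continuous_intros) auto
  fix x assume x: "x \<in> {0..D} - {xa, x0}"
  have "(Mf has_real_derivative w x) (at x)"
  proof -
    consider "x < xa" | "xa < x \<and> x < x0" | "x0 < x" using x xax0 by fastforce
    then show ?thesis
    proof cases
      case 1
      have "((\<lambda>y. 2/al*(h*arctan(a/h) - a) + a*y) has_real_derivative a) (at x)"
        by (rule derivative_eq_intros refl | simp)+
      then show ?thesis unfolding r1[OF 1]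
        by (rule has_field_derivative_transform_within_open[where S="{..<xa}"])
           (auto simp: Mf_def r1 1)
    next
      case 2
      let ?t = "\<lambda>y. C*exp(-al*y) - h\<^sup>2"
      have tp: "?t x > 0" and wx: "w x = sqrt (?t x)" using r2 2 by auto
      have "((\<lambda>y. 2/al * (h*arctan(sqrt (?t y)/h) - sqrt (?t y)) + a*xa) has_real_derivative sqrt (?t x)) (at x)"
        by (rule deriv_mid) (use C h al tp in auto)
      then show ?thesis unfolding wx
      proof (rule has_field_derivative_transform_within_open[where S="{xa<..<x0}"])
          fix y assume y: "y \<in> {xa<..<x0}"
          then have e: "w y = sqrt (?t y)" "min y xa = xa" using r2 by auto
          show "2/al * (h*arctan(sqrt (?t y)/h) - sqrt (?t y)) + a*xa = Mf y"
            unfolding Mf_def e by simp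
        qed (use 2 in auto)
    next
      case 3
      have "((\<lambda>y. a*xa) has_real_derivative 0) (at x)"
        by (rule derivative_eq_intros refl | simp)+
      then show ?thesis unfolding r3[OF 3]
      proof (rule has_field_derivative_transform_within_open[where S="{x0<..}"])
          fix y assume y: "y \<in> {x0<..}"
          then have e: "w y = 0" "min y xa = xa" using r3 xax0 by auto
          show "a*xa = Mf y" unfolding Mf_def e by simp
        qed (use 3 in auto)
    qed
  qed
  then show "(Mf has_vector_derivative w x) (at x)"
    by (simp add: has_real_derivative_iff_has_vector_derivative)
qed



lemma P_formula:
  fixes \<eta> Pt \<sigma>2 \<gamma>thr \<alpha> h Dx Dy C a :: real
  assumes pos: "\<eta> > 0" "Pt > 0" "\<sigma>2 > 0" "\<gamma>thr > 0"
    and al: "\<alpha> > 0" and h: "h > 0" and Dx: "Dx > 0" and Dy: "Dy > 0"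
    and C_def: "C = \<eta> * Pt / (\<gamma>thr * \<sigma>2)"
    and a_def: "a = Dy/2"
    and w_def: "w = (\<lambda>x. min a (sqrt (max 0 (C*exp(-\<alpha>*x) - h\<^sup>2))))"
    and xa_def: "xa = ln (C/(a\<^sup>2+h\<^sup>2))/\<alpha>" and x0_def: "x0 = ln (C/h\<^sup>2)/\<alpha>"
    and Mf_def: "Mf = (\<lambda>x. 2/\<alpha>*(h*arctan(w x/h) - w x) + a*min x xa)"
  shows "P_out \<eta> Pt \<sigma>2 \<gamma>thr \<alpha> h Dx Dy = 1 - (Mf Dx - Mf 0)/(a*Dx)"
proof -
  have C: "C > 0" using pos C_def by simp
  have a: "a > 0" using Dy a_def by simp
  define M1 where "M1 = uniform_measure lborel {0..Dx}"
  define M2 where "M2 = uniform_measure lborel {-Dy/2..Dy/2}"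
  define S where "S = {(xm, ym). snr_r \<eta> Pt \<sigma>2 \<alpha> h xm ym \<le> \<gamma>thr}"
  have Dyeq: "-Dy/2 = -a" "Dy/2 = a" using a_def by auto
  have p1: "prob_space M1" unfolding M1_def using Dx by (intro prob_space_uniform_measure) auto
  have p2: "prob_space M2" unfolding M2_def using a Dyeq by (intro prob_space_uniform_measure) auto
  interpret M2: prob_space M2 by (rule p2)
  have sp: "space (M1 \<Otimes>\<^sub>M M2) = UNIV" by (simp add: space_pair_measure M1_def M2_def)
  have Seq: "S = {p \<in> space (M1 \<Otimes>\<^sub>M M2). snr_r \<eta> Pt \<sigma>2 \<alpha> h (fst p) (snd p) \<le> \<gamma>thr}"
    unfolding sp S_def by auto
  have Smeas: "S \<in> sets (M1 \<Otimes>\<^sub>M M2)" unfolding Seq M1_def M2_def snr_r_def by measurable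
  have key: "snr_r \<eta> Pt \<sigma>2 \<alpha> h x y \<le> \<gamma>thr \<longleftrightarrow> C*exp(-\<alpha>*x) - h\<^sup>2 \<le> y\<^sup>2" for x y
  proof -
    have d: "\<sigma>2 * (y\<^sup>2 + h\<^sup>2) > 0" using pos h by (simp add: add_nonneg_pos)
    have "snr_r \<eta> Pt \<sigma>2 \<alpha> h x y \<le> \<gamma>thr \<longleftrightarrow> \<eta> * Pt * exp (- \<alpha> * x) \<le> \<gamma>thr * (\<sigma>2 * (y\<^sup>2 + h\<^sup>2))"
      unfolding snr_r_def using d by (simp add: divide_le_eq)
    also have "\<dots> \<longleftrightarrow> C*exp(-\<alpha>*x) \<le> y\<^sup>2 + h\<^sup>2" unfolding C_def using pos
      by (simp add: field_simps)
    finally show ?thesis by linarith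
  qed
  have inner: "emeasure M2 (Pair x -` S) = ennreal (1 - w x / a)" for x
  proof -
    have "Pair x -` S = {y. C*exp(-\<alpha>*x) - h\<^sup>2 \<le> y\<^sup>2}" unfolding S_def using key by auto
    moreover have "{y. C*exp(-\<alpha>*x) - h\<^sup>2 \<le> y\<^sup>2} \<in> sets lborel" by measurable
    ultimately have "emeasure M2 (Pair x -` S) = emeasure lborel ({-a..a} \<inter> {y. C*exp(-\<alpha>*x) - h\<^sup>2 \<le> y\<^sup>2}) / emeasure lborel {-a..a}"
      unfolding M2_def Dyeq by simp
    also have "\<dots> = ennreal (2*a - 2 * w x) / ennreal (2*a)"
      unfolding inner_meas[OF a] w_def using a by simp
    also have "\<dots> = ennreal ((2*a - 2 * w x) / (2*a))"
      using a by (intro divide_ennreal) (auto simp: w_def)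
    also have "(2*a - 2 * w x) / (2*a) = 1 - w x / a" using a by (simp add: field_simps)
    finally show ?thesis .
  qed
  have wle: "0 \<le> w x \<and> w x \<le> a" for x using a by (simp add: w_def)
  have int: "(w has_integral (Mf Dx - Mf 0)) {0..Dx}"
    by (rule integral_w[OF al h C a _ w_def xa_def x0_def Mf_def]) (use Dx in simp)
  define I where "I = Dx - (Mf Dx - Mf 0)/a"
  have qI: "((\<lambda>x. 1 - w x / a) has_integral I) {0..Dx}"
    unfolding I_def using has_integral_diff[OF has_integral_const_real[of 1 0 Dx] has_integral_divide[OF int, of a]] Dx
    by simp
  have qnn: "0 \<le> 1 - w x / a" for x using wle[of x] a by (simp add: field_simps)
  have I0: "0 \<le> I" by (rule has_integral_nonneg[OF qI]) (use qnn in auto)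
  have "emeasure (M1 \<Otimes>\<^sub>M M2) S = (\<integral>\<^sup>+x. emeasure M2 (Pair x -` S) \<partial>M1)"
    by (rule M2.emeasure_pair_measure_alt[OF Smeas])
  also have "\<dots> = (\<integral>\<^sup>+x. ennreal (1 - w x / a) \<partial>M1)" by (simp add: inner)
  also have "\<dots> = (\<integral>\<^sup>+x. ennreal (1 - w x / a) * indicator {0..Dx} x \<partial>lborel) / emeasure lborel {0..Dx}"
    unfolding M1_def by (rule nn_integral_uniform_measure) (auto simp: w_def)
  also have "\<dots> = ennreal I / ennreal Dx"
    using nn_integral_has_integral_lebesgue'[OF qnn qI] Dx by simp
  also have "\<dots> = ennreal (I / Dx)" using I0 Dx by (intro divide_ennreal) auto
  finally have "emeasure (M1 \<Otimes>\<^sub>M M2) S = ennreal (I / Dx)" .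
  then have "measure (M1 \<Otimes>\<^sub>M M2) S = I / Dx" unfolding measure_def using I0 Dx by simp
  moreover have "P_out \<eta> Pt \<sigma>2 \<gamma>thr \<alpha> h Dx Dy = measure (M1 \<Otimes>\<^sub>M M2) S"
    unfolding P_out_def user_law_def M1_def M2_def S_def ..
  ultimately show ?thesis unfolding I_def using Dx a by (simp add: field_simps)
qed



lemma wval: "0 < a \<Longrightarrow> 0 \<le> t \<Longrightarrow> t \<le> a\<^sup>2 \<Longrightarrow> min a (sqrt (max 0 t)) = sqrt (t::real)"
  by (metis abs_of_pos max.absorb2 min.absorb2 real_sqrt_abs real_sqrt_le_mono)
lemma wval0: "t \<le> 0 \<Longrightarrow> 0 < a \<Longrightarrow> min a (sqrt (max 0 t)) = (0::real)"
  by (simp add: max_def)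
lemma wvala: "0 < a \<Longrightarrow> a\<^sup>2 \<le> t \<Longrightarrow> min a (sqrt (max 0 t)) = (a::real)"
  by (metis abs_of_pos le_max_iff_disj min.absorb1 real_sqrt_abs real_sqrt_le_mono)

lemma xa_le:
  fixes C K al y :: real assumes "C > 0" "K > 0" "al > 0"
  shows "y \<le> ln(C/K)/al \<longleftrightarrow> K \<le> C*exp(-al*y)"
  using exp_cmp2[OF assms, of y] by linarith

lemma xa_ge:
  fixes C K al y :: real assumes "C > 0" "K > 0" "al > 0"
  shows "ln(C/K)/al \<le> y \<longleftrightarrow> C*exp(-al*y) \<le> K"
  using exp_cmp[OF assms, of y] by linarith

theorem proposition1:
  fixes \<eta> Pt \<sigma>2 \<gamma>thr \<alpha> h Dx Dy C :: real
  assumes "\<eta> > 0" "Pt > 0" "\<sigma>2 > 0" "\<gamma>thr > 0"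
    and "\<alpha> > 0" "h > 0" "Dx > 0" "Dy > 0"
    and C_def: "C = \<eta> * Pt / (\<gamma>thr * \<sigma>2)"
  defines "P \<equiv> P_out \<eta> Pt \<sigma>2 \<gamma>thr \<alpha> h Dx Dy"
  shows
    "(h\<^sup>2 \<ge> C \<longrightarrow> P = 1) \<and>
     (h\<^sup>2 \<le> C \<and> h\<^sup>2 \<ge> C - Dy\<^sup>2 / 4 \<and> h\<^sup>2 \<ge> C * exp (- \<alpha> * Dx) \<longrightarrow>
        P = 1 + 4 / (\<alpha> * Dx * Dy) * (h * arctan (sqrt (C - h\<^sup>2) / h) - sqrt (C - h\<^sup>2))) \<and>
     (h\<^sup>2 \<le> C - Dy\<^sup>2 / 4 \<and> h\<^sup>2 \<ge> C * exp (- \<alpha> * Dx) \<longrightarrow>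
        P = 1 + (ln (h\<^sup>2 / C + Dy\<^sup>2 / (4 * C)) - 2) / (\<alpha> * Dx)
              + 4 * h * arctan (Dy / (2 * h)) / (\<alpha> * Dx * Dy)) \<and>
     (h\<^sup>2 \<ge> C - Dy\<^sup>2 / 4 \<and> h\<^sup>2 \<le> C * exp (- \<alpha> * Dx) \<longrightarrow>
        P = 1 + 4 / (\<alpha> * Dx * Dy) *
              (sqrt (C * exp (- \<alpha> * Dx) - h\<^sup>2)
               - h * arctan (sqrt (C * exp (- \<alpha> * Dx) - h\<^sup>2) / h)
               - sqrt (C - h\<^sup>2) + h * arctan (sqrt (C - h\<^sup>2) / h))) \<and>
     (h\<^sup>2 \<le> C - Dy\<^sup>2 / 4 \<and> h\<^sup>2 \<le> C * exp (- \<alpha> * Dx) \<and>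
      h\<^sup>2 \<ge> C * exp (- \<alpha> * Dx) - Dy\<^sup>2 / 4 \<longrightarrow>
        P = 1 + 4 / (\<alpha> * Dx * Dy) *
              (sqrt (C * exp (- \<alpha> * Dx) - h\<^sup>2)
               - h * arctan (sqrt (C * exp (- \<alpha> * Dx) - h\<^sup>2) / h)
               - Dy / 2 + h * arctan (Dy / (2 * h)))
            + ln (h\<^sup>2 / C + Dy\<^sup>2 / (4 * C)) / (\<alpha> * Dx)) \<and>
     (h\<^sup>2 \<le> C * exp (- \<alpha> * Dx) - Dy\<^sup>2 / 4 \<longrightarrow> P = 0)"
proof -
  note pos = assms(1-4) and al = assms(5) and h = assms(6) and Dx = assms(7) and Dy = assms(8)
  define a where "a = Dy/2"
  define w where "w = (\<lambda>x. min a (sqrt (max 0 (C*exp(-\<alpha>*x) - h\<^sup>2))))"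
  define xa where "xa = ln (C/(a\<^sup>2+h\<^sup>2))/\<alpha>"
  define x0 where "x0 = ln (C/h\<^sup>2)/\<alpha>"
  define Mf where "Mf = (\<lambda>x. 2/\<alpha>*(h*arctan(w x/h) - w x) + a*min x xa)"
  have PF: "P = 1 - (Mf Dx - Mf 0)/(a*Dx)" unfolding P_def
    by (rule P_formula[OF pos al h Dx Dy C_def a_def w_def xa_def x0_def Mf_def])
  have C: "C > 0" using pos C_def by simp
  have a: "a > 0" using Dy a_def by simp
  have Dya: "Dy = 2*a" "Dy\<^sup>2/4 = a\<^sup>2" using a_def by (auto simp: power2_eq_square)
  have a2: "a\<^sup>2 > 0" using a by simp
  have ap: "a\<^sup>2 + h\<^sup>2 > 0" using h a by (simp add: add_pos_pos)
  define E where "E = exp (-\<alpha>*Dx)"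
  have E1: "E < 1" "E > 0" unfolding E_def using al Dx by auto
  have CE: "C*E < C" using C E1 by simp
  have w0: "w 0 = min a (sqrt (max 0 (C - h\<^sup>2)))" by (simp add: w_def)
  have wD: "w Dx = min a (sqrt (max 0 (C*E - h\<^sup>2)))" by (simp add: w_def E_def)
  have xa0: "0 \<le> xa \<longleftrightarrow> a\<^sup>2+h\<^sup>2 \<le> C" using xa_le[OF C ap al, of 0] by (simp add: xa_def)
  have xaD: "Dx \<le> xa \<longleftrightarrow> a\<^sup>2+h\<^sup>2 \<le> C*E" using xa_le[OF C ap al, of Dx] by (simp add: xa_def E_def)
  have xa0': "xa \<le> 0 \<longleftrightarrow> C \<le> a\<^sup>2+h\<^sup>2" using xa_ge[OF C ap al, of 0] by (simp add: xa_def)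
  have xaD': "xa \<le> Dx \<longleftrightarrow> C*E \<le> a\<^sup>2+h\<^sup>2" using xa_ge[OF C ap al, of Dx] by (simp add: xa_def E_def)
  have lnx: "ln (h\<^sup>2 / C + Dy\<^sup>2 / (4 * C)) = - (\<alpha> * xa)"
  proof -
    have "h\<^sup>2 / C + Dy\<^sup>2 / (4 * C) = inverse (C/(a\<^sup>2+h\<^sup>2))" using C Dya by (simp add: field_simps)
    then show ?thesis unfolding xa_def using al C ap by (simp add: ln_div)
  qed
  have Mdiff: "Mf Dx - Mf 0 = 2/\<alpha>*(h*arctan(w Dx/h) - w Dx) + a*min Dx xa - (2/\<alpha>*(h*arctan(w 0/h) - w 0) + a*min 0 xa)"
    by (simp add: Mf_def)
  show ?thesis
  proof (intro conjI impI)
    assume c: "h\<^sup>2 \<ge> C"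
    have "w 0 = 0" "w Dx = 0" unfolding w0 wD using c CE a by (auto intro!: wval0)
    moreover have "xa \<le> 0" by (subst xa0') (use c a2 in linarith)
    moreover have "xa \<le> Dx" by (subst xaD') (use c CE a2 in linarith)
    ultimately show "P = 1" unfolding PF Mdiff by simp
  next
    assume c: "h\<^sup>2 \<le> C \<and> h\<^sup>2 \<ge> C - Dy\<^sup>2 / 4 \<and> h\<^sup>2 \<ge> C * exp (- \<alpha> * Dx)"
    have "w 0 = sqrt (C - h\<^sup>2)" unfolding w0 by (rule wval0 wval wvala) (use c CE a Dya E_def in auto)
    moreover have "w Dx = 0" unfolding wD by (rule wval0 wval wvala) (use c CE a Dya E_def in auto)
    moreover have i0: "xa \<le> 0" by (subst xa0') (use c[unfolded Dya(2) E_def[symmetric]] CE a2 in linarith)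
    moreover have iD: "xa \<le> Dx" by (subst xaD') (use c[unfolded Dya(2) E_def[symmetric]] CE a2 in linarith)
    moreover have "min 0 xa = xa" "min Dx xa = xa" using i0 iD by (auto simp: min_def)
    ultimately show "P = 1 + 4 / (\<alpha> * Dx * Dy) * (h * arctan (sqrt (C - h\<^sup>2) / h) - sqrt (C - h\<^sup>2))"
      unfolding PF Mdiff Dya(1) using a al Dx by (simp add: field_simps)
  next
    assume c: "h\<^sup>2 \<le> C - Dy\<^sup>2 / 4 \<and> h\<^sup>2 \<ge> C * exp (- \<alpha> * Dx)"
    have "w 0 = a" unfolding w0 by (rule wval0 wval wvala) (use c CE a Dya E_def in auto)
    moreover have "w Dx = 0" unfolding wD by (rule wval0 wval wvala) (use c CE a Dya E_def in auto)
    moreover have i0: "0 \<le> xa" by (subst xa0) (use c[unfolded Dya(2) E_def[symmetric]] CE a2 in linarith)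
    moreover have iD: "xa \<le> Dx" by (subst xaD') (use c[unfolded Dya(2) E_def[symmetric]] CE a2 in linarith)
    moreover have "min 0 xa = 0" "min Dx xa = xa" using i0 iD by (auto simp: min_def)
    ultimately show "P = 1 + (ln (h\<^sup>2 / C + Dy\<^sup>2 / (4 * C)) - 2) / (\<alpha> * Dx)
              + 4 * h * arctan (Dy / (2 * h)) / (\<alpha> * Dx * Dy)"
      unfolding PF Mdiff lnx unfolding Dya(1) using a al Dx h by (simp add: field_simps)
  next
    assume c: "h\<^sup>2 \<ge> C - Dy\<^sup>2 / 4 \<and> h\<^sup>2 \<le> C * exp (- \<alpha> * Dx)"
    have "w 0 = sqrt (C - h\<^sup>2)" unfolding w0 by (rule wval0 wval wvala) (use c CE a Dya E_def in auto)
    moreover have "w Dx = sqrt (C * exp (- \<alpha> * Dx) - h\<^sup>2)" unfolding wD E_def by (rule wval0 wval wvala) (use c CE a Dya E_def in auto)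
    moreover have i0: "xa \<le> 0" by (subst xa0') (use c[unfolded Dya(2) E_def[symmetric]] CE a2 in linarith)
    moreover have iD: "xa \<le> Dx" by (subst xaD') (use c[unfolded Dya(2) E_def[symmetric]] CE a2 in linarith)
    moreover have "min 0 xa = xa" "min Dx xa = xa" using i0 iD by (auto simp: min_def)
    ultimately show "P = 1 + 4 / (\<alpha> * Dx * Dy) *
              (sqrt (C * exp (- \<alpha> * Dx) - h\<^sup>2)
               - h * arctan (sqrt (C * exp (- \<alpha> * Dx) - h\<^sup>2) / h)
               - sqrt (C - h\<^sup>2) + h * arctan (sqrt (C - h\<^sup>2) / h))"
      unfolding PF Mdiff Dya(1) using a al Dx by (simp add: field_simps)
  next
    assume c: "h\<^sup>2 \<le> C - Dy\<^sup>2 / 4 \<and> h\<^sup>2 \<le> C * exp (- \<alpha> * Dx) \<and>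
      h\<^sup>2 \<ge> C * exp (- \<alpha> * Dx) - Dy\<^sup>2 / 4"
    have "w 0 = a" unfolding w0 by (rule wval0 wval wvala) (use c CE a Dya E_def in auto)
    moreover have "w Dx = sqrt (C * exp (- \<alpha> * Dx) - h\<^sup>2)" unfolding wD E_def by (rule wval0 wval wvala) (use c CE a Dya E_def in auto)
    moreover have i0: "0 \<le> xa" by (subst xa0) (use c[unfolded Dya(2) E_def[symmetric]] CE a2 in linarith)
    moreover have iD: "xa \<le> Dx" by (subst xaD') (use c[unfolded Dya(2) E_def[symmetric]] CE a2 in linarith)
    moreover have "min 0 xa = 0" "min Dx xa = xa" using i0 iD by (auto simp: min_def)
    ultimately show "P = 1 + 4 / (\<alpha> * Dx * Dy) *
              (sqrt (C * exp (- \<alpha> * Dx) - h\<^sup>2)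
               - h * arctan (sqrt (C * exp (- \<alpha> * Dx) - h\<^sup>2) / h)
               - Dy / 2 + h * arctan (Dy / (2 * h)))
            + ln (h\<^sup>2 / C + Dy\<^sup>2 / (4 * C)) / (\<alpha> * Dx)"
      unfolding PF Mdiff lnx unfolding Dya(1) using a al Dx h by (simp add: field_simps)
  next
    assume c: "h\<^sup>2 \<le> C * exp (- \<alpha> * Dx) - Dy\<^sup>2 / 4"
    have "w 0 = a" unfolding w0 by (rule wval0 wval wvala) (use c CE a Dya E_def in auto)
    moreover have "w Dx = a" unfolding wD by (rule wval0 wval wvala) (use c CE a Dya E_def in auto)
    moreover have i0: "0 \<le> xa" by (subst xa0) (use c[unfolded Dya(2) E_def[symmetric]] CE a2 in linarith)
    moreover have iD: "Dx \<le> xa" by (subst xaD) (use c[unfolded Dya(2) E_def[symmetric]] CE a2 in linarith)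
    moreover have "min 0 xa = 0" "min Dx xa = Dx" using i0 iD by (auto simp: min_def)
    ultimately show "P = 0" unfolding PF Mdiff using a Dx by (simp add: field_simps)
  qed
qed

end
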